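(* In the universal enveloping algebra $U(gl(m|n+1))$, the elements $\tau_k=(\mathcal B^k)^{N}_{\ N}$, $k=1,2,3,\dots$, pairwise commute: $[\tau_\ell,\tau_k]=0$ for all $\ell,k$.
   Context: Over $\mathbb{C}$, $N=m+n+1$, parity $(p)=0$ for $1\le p\le m$ and $(p)=1$ for $m<p\le N$. $gl(m|n+1)$ has homogeneous basis $E_{pq}$ ($1\le p,q\le N$) of parity $(p)+(q)$ with graded bracket $[E_{pq},E_{rs}]=\delta_{qr}E_{ps}-(-1)^{((p)+(q))((r)+(s))}\delta_{ps}E_{rq}$. $\mathcal B$ is the $N\times N$ matrix with entries $\mathcal B^p_{\ q}=(-1)^{(p)}E_{pq}\in U(gl(m|n+1))$, and its powers are defined recursively by $(\mathcal B^k)^p_{\ q}=\sum_{r=1}^N\mathcal B^p_{\ r}(\mathcal B^{k-1})^r_{\ q}$, $(\mathcal B^0)^p_{\ q}=\delta_{pq}$. The $\tau_k$ are even elements, so $[\ ,\ ]$ is the ordinary commutator. *)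

theory Defs
  imports Complex_Main
begin

definition par :: "nat \<Rightarrow> nat \<Rightarrow> nat" where
  "par m p = (if p \<le> m then 0 else 1)"

text \<open>A family e of elements of a ring 'a satisfies the defining relations of
  U(gl(m|n+1)) on the generators E_pq:
  E_pq E_rs - (-1)^(|E_pq||E_rs|) E_rs E_pq = [E_pq,E_rs]
  = delta_qr E_ps - (-1)^(((p)+(q))((r)+(s))) delta_ps E_rq.\<close>
definition gl_rels :: "nat \<Rightarrow> nat \<Rightarrow> (nat \<Rightarrow> nat \<Rightarrow> 'a::ring_1) \<Rightarrow> bool" where
  "gl_rels m n e \<longleftrightarrow>
    (\<forall>p\<in>{1..m+n+1}. \<forall>q\<in>{1..m+n+1}. \<forall>r\<in>{1..m+n+1}. \<forall>s\<in>{1..m+n+1}.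
      e p q * e r s
        - (-1) ^ ((par m p + par m q) * (par m r + par m s)) * e r s * e p q
      = (if q = r then e p s else 0)
        - (-1) ^ ((par m p + par m q) * (par m r + par m s)) * (if p = s then e r q else 0))"

definition Bmat :: "nat \<Rightarrow> (nat \<Rightarrow> nat \<Rightarrow> 'a::ring_1) \<Rightarrow> nat \<Rightarrow> nat \<Rightarrow> 'a" where
  "Bmat m e p q = (-1) ^ par m p * e p q"

fun Bpow :: "nat \<Rightarrow> nat \<Rightarrow> (nat \<Rightarrow> nat \<Rightarrow> 'a::ring_1) \<Rightarrow> nat \<Rightarrow> nat \<Rightarrow> nat \<Rightarrow> 'a" where
  "Bpow m n e 0 p q = (if p = q then 1 else 0)"
| "Bpow m n e (Suc k) p q = (\<Sum>r = 1..m+n+1. Bmat m e p r * Bpow m n e k r q)"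

definition tau :: "nat \<Rightarrow> nat \<Rightarrow> (nat \<Rightarrow> nat \<Rightarrow> 'a::ring_1) \<Rightarrow> nat \<Rightarrow> 'a" where
  "tau m n e k = Bpow m n e k (m+n+1) (m+n+1)"

end

theory Submission imports Defs begin

definition sg :: "nat \<Rightarrow> 'a::ring_1" where "sg x = (if even x then 1 else -1)"

lemma pow_sg: "(-1::'a::ring_1)^x = sg x" by (simp add: sg_def minus_one_power_iff)

lemma br_left:
  fixes x y z a b :: "'a::ring_1"
  assumes "\<And>w. a * w = w * a" "\<And>w. b * w = w * b"
  shows "(x*y)*z - (a*b)*z*(x*y) = x*(y*z - b*z*y) + b*(x*z - a*z*x)*y"
proof -
  have "b*x*z*y = x*b*z*y" using assms(2)[of x] by simp
  moreover have "b*a*z*x*y = a*b*z*x*y" using assms(1)[of b] by simp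
  ultimately show ?thesis by (simp add: algebra_simps)
qed

lemma br_right:
  fixes x y z a b :: "'a::ring_1"
  assumes "\<And>w. a * w = w * a" "\<And>w. b * w = w * b"
  shows "x*(y*z) - (a*b)*(y*z)*x = (x*y - a*y*x)*z + a*y*(x*z - b*z*x)"
proof -
  have "a*y*b*z*x = a*b*y*z*x" using assms(2)[of y] by (simp add: mult.assoc)
  then show ?thesis by (simp add: algebra_simps)
qed

declare sum.cl_ivl_Suc[simp del] prod.cl_ivl_Suc[simp del]

lemma sg_central: "sg x * w = w * (sg x :: 'a::ring_1)" by (simp add: sg_def)

context
  fixes m n :: nat and e :: "nat \<Rightarrow> nat \<Rightarrow> 'a::ring_1"
  assumes rels: "gl_rels m n e"
begin

abbreviation "II \<equiv> {1..m+n+1}"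
abbreviation "M \<equiv> Bmat m e"
abbreviation "P \<equiv> Bpow m n e"

definition "sgm p = (sg (par m p) :: 'a)"
definition "sig i j k l = (sg ((par m i + par m j) * (par m k + par m l)) :: 'a)"
definition "gam i j k l = (sg (par m i * par m j + par m i * par m k + par m j * par m k) :: 'a)"

lemma cen: "sgm p * w = w * sgm p" "sig i j k l * w = w * sig i j k l" "gam i j k l * w = w * gam i j k l"
  by (simp_all add: sgm_def sig_def gam_def sg_central)

lemma relM:
  assumes "i \<in> II" "j \<in> II" "k \<in> II" "l \<in> II"
  shows "M i j * M k l - sig i j k l * M k l * M i j
    = (if j = k then sgm j * M i l else 0) - sig i j k l * (if i = l then sgm i * M k j else 0)"
proof -
  have r: "e i j * e k l - sig i j k l * e k l * e i j
      = (if j = k then e i l else 0) - sig i j k l * (if i = l then e k j else 0)"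
    using rels assms unfolding gl_rels_def sig_def pow_sg by blast
  show ?thesis using r
    by (auto simp: Bmat_def sgm_def sig_def sg_def par_def algebra_simps neg_eq_iff_add_eq_0 split: if_splits)
qed

lemma P1: "j \<in> II \<Longrightarrow> P (Suc 0) i j = M i j"
  by (simp add: if_distrib sum.delta' cong: if_cong)

lemma Padd: "k \<in> II \<Longrightarrow> (\<Sum>r\<in>II. P s k r * P t r l) = P (s+t) k l"
proof (induction s arbitrary: k)
  case 0
  have "(\<Sum>r\<in>II. P 0 k r * P t r l) = (\<Sum>r\<in>II. if r = k then P t r l else 0)"
    by (intro sum.cong) auto
  also have "\<dots> = P t k l" using 0 by (simp only: sum.delta finite_atLeastAtMost if_True)
  finally show ?case by simp
next
  case (Suc s)
  have "(\<Sum>r\<in>II. P (Suc s) k r * P t r l) = (\<Sum>r\<in>II. \<Sum>q\<in>II. M k q * (P s q r * P t r l))"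
    by (simp add: sum_distrib_right mult.assoc)
  also have "\<dots> = (\<Sum>q\<in>II. M k q * (\<Sum>r\<in>II. P s q r * P t r l))"
    by (subst sum.swap) (simp add: sum_distrib_left)
  also have "\<dots> = (\<Sum>q\<in>II. M k q * P (s+t) q l)"
    using Suc.IH by (intro sum.cong) auto
  finally show ?case by simp
qed


lemma sgn1: "sig i j k l = sig i j k r * sig i j r l"
  and sgn2: "sig i j k i * sgm i = sig i j k j * sgm j"
  and sgn3: "sig i j k l = sig i r k l * sig r j k l"
  and sgn4: "gam r j k l * sig i r k j = gam i j k l"
  and sgn5: "gam k j k l * sgm k = 1"
  and sgn6: "sig i j k i * sgm i = gam i j k i"
  and sgn7: "gam k j i l = gam i j k l"
  and sgn8: "gam i j k l * sig k j i l = sig k j k l * sgm k"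
  and sgn9: "gam i j k l * gam i j k l = 1"
  and sgn10: "sig i j k k = 1"
  unfolding sig_def gam_def sgm_def sg_def par_def by auto


lemma Cov:
  assumes ij: "i \<in> II" "j \<in> II" and kl: "k \<in> II" "l \<in> II"
  shows "M i j * P b k l - sig i j k l * P b k l * M i j
    = (if j = k then sgm j * P b i l else 0) - sig i j k l * (if i = l then sgm i * P b k j else 0)"
  using kl
proof (induction b arbitrary: k)
  case 0
  have aux: "sig i j j i * sgm i = sgm j" for i j using sgn2[of i j j] sgn10[of i j j] by simp
  from 0 show ?case by (auto simp: sgn10 aux)
next
  case (Suc b)
  have "M i j * P (Suc b) k l - sig i j k l * P (Suc b) k l * M i j
     = (\<Sum>r\<in>II. M i j * (M k r * P b r l) - sig i j k l * (M k r * P b r l) * M i j)"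
    by (simp add: sum_distrib_left sum_distrib_right sum_subtractf)
  also have "\<dots> = (\<Sum>r\<in>II. (M i j * M k r - sig i j k r * M k r * M i j) * P b r l
        + sig i j k r * M k r * (M i j * P b r l - sig i j r l * P b r l * M i j))"
  proof (rule sum.cong[OF refl])
    fix r
    have e1: "sig i j k l = sig i j k r * sig i j r l" by (rule sgn1)
    show "M i j * (M k r * P b r l) - sig i j k l * (M k r * P b r l) * M i j
      = (M i j * M k r - sig i j k r * M k r * M i j) * P b r l
        + sig i j k r * M k r * (M i j * P b r l - sig i j r l * P b r l * M i j)"
      unfolding e1 by (rule br_right; rule cen)
  qed
  also have "\<dots> = (\<Sum>r\<in>II. ((if j = k then sgm j * M i r else 0) - sig i j k r * (if i = r then sgm i * M k j else 0)) * P b r l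
        + sig i j k r * M k r * ((if j = r then sgm j * P b i l else 0) - sig i j r l * (if i = l then sgm i * P b r j else 0)))"
    using relM Suc.IH Suc.prems ij by (intro sum.cong) auto
  also have "\<dots> = (\<Sum>r\<in>II. (if j = k then sgm j * (M i r * P b r l) else 0)
       - (if r = i then sig i j k i * sgm i * M k j * P b i l else 0)
       + (if r = j then sig i j k j * sgm j * M k j * P b i l else 0)
       - (if i = l then sig i j k l * sgm i * (M k r * P b r j) else 0))"
  proof (rule sum.cong[OF refl])
    fix r
    have d: "sig i j k r * M k r * (sig i j r l * X) = sig i j k l * (M k r * X)" for X
    proof -
      have "M k r * (sig i j r l * X) = sig i j r l * (M k r * X)"
        using cen(2)[of i j r l "M k r"] by (simp add: mult.assoc[symmetric])
      then have "sig i j k r * M k r * (sig i j r l * X) = (sig i j k r * sig i j r l) * (M k r * X)"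
        by (simp add: mult.assoc)
      then show ?thesis using sgn1[of i j k l r] by simp
    qed
    have c: "sig i j k r * M k r * (sgm j * X) = sig i j k r * sgm j * M k r * X" for X
      by (metis mult.assoc cen(1))
    show "((if j = k then sgm j * M i r else 0) - sig i j k r * (if i = r then sgm i * M k j else 0)) * P b r l
        + sig i j k r * M k r * ((if j = r then sgm j * P b i l else 0) - sig i j r l * (if i = l then sgm i * P b r j else 0))
      = (if j = k then sgm j * (M i r * P b r l) else 0)
       - (if r = i then sig i j k i * sgm i * M k j * P b i l else 0)
       + (if r = j then sig i j k j * sgm j * M k j * P b i l else 0)
       - (if i = l then sig i j k l * sgm i * (M k r * P b r j) else 0)"
    proof -
      have t1: "(if j = k then sgm j * M i r else 0) * P b r l = (if j = k then sgm j * (M i r * P b r l) else 0)"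
        by (simp add: mult.assoc)
      have t2: "(sig i j k r * (if i = r then sgm i * M k j else 0)) * P b r l
          = (if r = i then sig i j k i * sgm i * M k j * P b i l else 0)"
        by (auto simp: mult.assoc)
      have t3: "sig i j k r * M k r * (if j = r then sgm j * P b i l else 0)
          = (if r = j then sig i j k j * sgm j * M k j * P b i l else 0)"
        using c[of "P b i l"] by auto
      have t4: "sig i j k r * M k r * (sig i j r l * (if i = l then sgm i * P b r j else 0))
          = (if i = l then sig i j k l * sgm i * (M k r * P b r j) else 0)"
      proof (cases "i = l")
        case True
        have "M k r * (sgm i * P b r j) = sgm i * (M k r * P b r j)"
          by (metis cen(1) mult.assoc)
        then show ?thesis using True d[of "sgm i * P b r j"] by (simp add: mult.assoc)
      qed simp
      show ?thesis
        by (simp only: left_diff_distrib right_diff_distrib distrib_left distrib_right t1 t2 t3 t4)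
           (simp add: algebra_simps)
    qed
  qed
  also have "\<dots> = (if j = k then sgm j * P (Suc b) i l else 0)
       - sig i j k i * sgm i * M k j * P b i l + sig i j k j * sgm j * M k j * P b i l
       - (if i = l then sig i j k l * sgm i * P (Suc b) k j else 0)"
    using ij by (simp add: sum.distrib sum_subtractf sum_distrib_left sum.delta)
  also have "\<dots> = (if j = k then sgm j * P (Suc b) i l else 0) - sig i j k l * (if i = l then sgm i * P (Suc b) k j else 0)"
    using sgn2[of i j k] by (simp add: mult.assoc)
  finally show ?case .
qed


lemma sgn11: "sig i i k l = 1"
  unfolding sig_def sg_def by simp

lemma Qlem:
  assumes ij: "i \<in> II" "j \<in> II" and kl: "k \<in> II" "l \<in> II"
  shows "(\<Sum>r\<in>II. gam r j k l * (M i r * P t k j * P u r l))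
    = P t i j * P u k l - (if i = j then gam i j k l * sgm i * P (t+u) k l else 0)
      + gam i j k l * P t k j * P (Suc u) i l"
proof -
  have pw: "gam r j k l * (M i r * P t k j * P u r l)
     = (if r = k then P t i j * P u r l else 0)
       - (if i = j then gam i j k l * sgm i * (P t k r * P u r l) else 0)
       + gam i j k l * P t k j * (M i r * P u r l)" if r: "r \<in> II" for r
  proof -
    have cv: "M i r * P t k j = (if r = k then sgm r * P t i j else 0)
        - sig i r k j * (if i = j then sgm i * P t k r else 0) + sig i r k j * P t k j * M i r"
      using Cov[OF ij(1) r kl(1) ij(2), of t] by (simp add: algebra_simps)
    have "gam r j k l * (M i r * P t k j * P u r l)
       = gam r j k l * ((if r = k then sgm r * P t i j else 0) * P u r l)
        - (gam r j k l * sig i r k j) * (if i = j then sgm i * P t k r else 0) * P u r l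
        + (gam r j k l * sig i r k j) * P t k j * (M i r * P u r l)"
      unfolding cv by (simp add: algebra_simps)
    also have "\<dots> = (if r = k then P t i j * P u r l else 0)
       - (if i = j then gam i j k l * sgm i * (P t k r * P u r l) else 0)
       + gam i j k l * P t k j * (M i r * P u r l)"
      using sgn4[of r j k l i] sgn5[of k j l] by (auto simp: mult.assoc[symmetric])
    finally show ?thesis .
  qed
  have "(\<Sum>r\<in>II. gam r j k l * (M i r * P t k j * P u r l))
     = (\<Sum>r\<in>II. (if r = k then P t i j * P u r l else 0)
       - (if i = j then gam i j k l * sgm i * (P t k r * P u r l) else 0)
       + gam i j k l * P t k j * (M i r * P u r l))"
    using pw by (rule sum.cong[OF refl])
  also have "\<dots> = P t i j * P u k l - (if i = j then gam i j k l * sgm i * P (t+u) k l else 0)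
      + gam i j k l * P t k j * P (Suc u) i l"
    using kl Padd[OF kl(1), of t u l] by (simp add: sum.distrib sum_subtractf sum_distrib_left[symmetric] sum.delta')
  finally show ?thesis .
qed


lemma MainC:
  assumes "i \<in> II" "j \<in> II" "k \<in> II" "l \<in> II"
  shows "P a i j * P b k l - sig i j k l * P b k l * P a i j
    = gam i j k l * (\<Sum>t<a. P t k j * P (a+b-1-t) i l - P (a+b-1-t) k j * P t i l)"
  using assms
proof (induction a arbitrary: b i j k l)
  case 0
  then show ?case by (auto simp: sgn11)
next
  case (Suc a)
  note ij = Suc.prems(1,2) and kl = Suc.prems(3,4)
  define S where "S r = (\<Sum>t<a. P t k j * P (a+b-1-t) r l - P (a+b-1-t) k j * P t r l)" for r
  have s1: "P (Suc a) i j * P b k l - sig i j k l * P b k l * P (Suc a) i j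
    = (\<Sum>r\<in>II. M i r * (P a r j * P b k l - sig r j k l * P b k l * P a r j)
        + sig r j k l * (M i r * P b k l - sig i r k l * P b k l * M i r) * P a r j)"
  proof -
    have "P (Suc a) i j * P b k l - sig i j k l * P b k l * P (Suc a) i j
      = (\<Sum>r\<in>II. (M i r * P a r j) * P b k l - (sig i r k l * sig r j k l) * P b k l * (M i r * P a r j))"
      using sgn3[of i j k l] by (simp add: sum_distrib_left sum_distrib_right sum_subtractf)
    also have "\<dots> = (\<Sum>r\<in>II. M i r * (P a r j * P b k l - sig r j k l * P b k l * P a r j)
        + sig r j k l * (M i r * P b k l - sig i r k l * P b k l * M i r) * P a r j)"
      by (rule sum.cong[OF refl], rule br_left; rule cen)
    finally show ?thesis .
  qed
  have s2: "(\<Sum>r\<in>II. M i r * (P a r j * P b k l - sig r j k l * P b k l * P a r j)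
        + sig r j k l * (M i r * P b k l - sig i r k l * P b k l * M i r) * P a r j) = (\<Sum>r\<in>II. M i r * (gam r j k l * S r))
     + (\<Sum>r\<in>II. sig r j k l * ((if r = k then sgm r * P b i l else 0) - sig i r k l * (if i = l then sgm i * P b k r else 0)) * P a r j)"
    unfolding sum.distrib[symmetric] S_def
    using Suc.IH ij kl Cov by (intro sum.cong) auto
  have p2: "(\<Sum>r\<in>II. sig r j k l * ((if r = k then sgm r * P b i l else 0) - sig i r k l * (if i = l then sgm i * P b k r else 0)) * P a r j)
     = sig k j k l * sgm k * P b i l * P a k j - (if i = l then sig i j k l * sgm i * P (b+a) k j else 0)"
  proof -
    have "(\<Sum>r\<in>II. sig r j k l * ((if r = k then sgm r * P b i l else 0) - sig i r k l * (if i = l then sgm i * P b k r else 0)) * P a r j)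
      = (\<Sum>r\<in>II. (if r = k then sig k j k l * sgm k * P b i l * P a k j else 0) - (if i = l then sig i j k l * sgm i * (P b k r * P a r j) else 0))"
    proof (rule sum.cong[OF refl])
      fix r
      have "sig r j k l * sig i r k l = sig i j k l" using sgn3[of i j k l r] cen(2)[of r j k l "sig i r k l"] by simp
      then show "sig r j k l * ((if r = k then sgm r * P b i l else 0) - sig i r k l * (if i = l then sgm i * P b k r else 0)) * P a r j
        = (if r = k then sig k j k l * sgm k * P b i l * P a k j else 0) - (if i = l then sig i j k l * sgm i * (P b k r * P a r j) else 0)"
        by (auto simp: ring_distribs mult.assoc[symmetric])
    qed
    also have "\<dots> = sig k j k l * sgm k * P b i l * P a k j - (if i = l then sig i j k l * sgm i * P (b+a) k j else 0)"
      using kl Padd[OF kl(1), of b a j] by (simp add: sum_subtractf sum_distrib_left[symmetric] sum.delta')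
    finally show ?thesis .
  qed
  have p1: "(\<Sum>r\<in>II. M i r * (gam r j k l * S r))
     = (\<Sum>t<a. (\<Sum>r\<in>II. gam r j k l * (M i r * P t k j * P (a+b-1-t) r l))
          - (\<Sum>r\<in>II. gam r j k l * (M i r * P (a+b-1-t) k j * P t r l)))"
  proof -
    have "(\<Sum>r\<in>II. M i r * (gam r j k l * S r)) = (\<Sum>r\<in>II. gam r j k l * (M i r * S r))"
      by (rule sum.cong[OF refl]) (metis cen(3) mult.assoc)
    also have "\<dots> = (\<Sum>r\<in>II. \<Sum>t<a. gam r j k l * (M i r * P t k j * P (a+b-1-t) r l)
          - gam r j k l * (M i r * P (a+b-1-t) k j * P t r l))"
      unfolding S_def by (simp add: sum_distrib_left algebra_simps)
    also have "\<dots> = (\<Sum>t<a. \<Sum>r\<in>II. gam r j k l * (M i r * P t k j * P (a+b-1-t) r l)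
          - gam r j k l * (M i r * P (a+b-1-t) k j * P t r l))"
      by (rule sum.swap)
    finally show ?thesis by (simp add: sum_subtractf)
  qed
  have p1b: "(\<Sum>t<a. (\<Sum>r\<in>II. gam r j k l * (M i r * P t k j * P (a+b-1-t) r l))
          - (\<Sum>r\<in>II. gam r j k l * (M i r * P (a+b-1-t) k j * P t r l))) = (\<Sum>t<a. (P t i j * P (a+b-1-t) k l - P (a+b-1-t) i j * P t k l)
        + gam i j k l * (P t k j * P (Suc (a+b-1-t)) i l - P (a+b-1-t) k j * P (Suc t) i l))"
  proof (rule sum.cong[OF refl])
    fix t
    have q1: "(\<Sum>r\<in>II. gam r j k l * (M i r * P t k j * P (a+b-1-t) r l))
      = P t i j * P (a+b-1-t) k l - (if i = j then gam i j k l * sgm i * P (t+(a+b-1-t)) k l else 0)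
      + gam i j k l * P t k j * P (Suc (a+b-1-t)) i l" by (rule Qlem[OF ij kl])
    have q2: "(\<Sum>r\<in>II. gam r j k l * (M i r * P (a+b-1-t) k j * P t r l))
      = P (a+b-1-t) i j * P t k l - (if i = j then gam i j k l * sgm i * P ((a+b-1-t)+t) k l else 0)
      + gam i j k l * P (a+b-1-t) k j * P (Suc t) i l" by (rule Qlem[OF ij kl])
    show "(\<Sum>r\<in>II. gam r j k l * (M i r * P t k j * P (a+b-1-t) r l))
          - (\<Sum>r\<in>II. gam r j k l * (M i r * P (a+b-1-t) k j * P t r l))
      = (P t i j * P (a+b-1-t) k l - P (a+b-1-t) i j * P t k l)
        + gam i j k l * (P t k j * P (Suc (a+b-1-t)) i l - P (a+b-1-t) k j * P (Suc t) i l)"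
      unfolding q1 q2 by (simp only: add.commute[of t "a+b-1-t"]) (simp add: algebra_simps)
  qed
  have p1c: "(\<Sum>t<a. (P t i j * P (a+b-1-t) k l - P (a+b-1-t) i j * P t k l)
        + gam i j k l * (P t k j * P (Suc (a+b-1-t)) i l - P (a+b-1-t) k j * P (Suc t) i l)) = gam i j k l * (P a k j * P b i l - sig k j i l * P b i l * P a k j)
        + gam i j k l * (\<Sum>t<a. P t k j * P (Suc (a+b-1-t)) i l - P (a+b-1-t) k j * P (Suc t) i l)"
  proof -
    have ih: "P a k j * P b i l - sig k j i l * P b i l * P a k j
      = gam k j i l * (\<Sum>t<a. P t i j * P (a+b-1-t) k l - P (a+b-1-t) i j * P t k l)"
      using Suc.IH ij kl by blast
    have "gam i j k l * (P a k j * P b i l - sig k j i l * P b i l * P a k j)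
       = (gam k j i l * gam k j i l) * (\<Sum>t<a. P t i j * P (a+b-1-t) k l - P (a+b-1-t) i j * P t k l)"
      unfolding ih sgn7[of i j k l] by (simp add: mult.assoc)
    then show ?thesis using sgn9 by (simp add: sum.distrib sum_distrib_left)
  qed
  have L: "P (Suc a) i j * P b k l - sig i j k l * P b k l * P (Suc a) i j
     = gam i j k l * (P a k j * P b i l - sig k j i l * P b i l * P a k j)
        + gam i j k l * (\<Sum>t<a. P t k j * P (Suc (a+b-1-t)) i l - P (a+b-1-t) k j * P (Suc t) i l)
        + (sig k j k l * sgm k * P b i l * P a k j - (if i = l then sig i j k l * sgm i * P (b+a) k j else 0))"
    unfolding s1 s2 p1 p1b p1c p2 by (simp only: add.assoc)
  have R: "(\<Sum>t<Suc a. P t k j * P (Suc a+b-1-t) i l - P (Suc a+b-1-t) k j * P t i l)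
     = (\<Sum>t<a. P t k j * P (Suc (a+b-1-t)) i l - P (a+b-1-t) k j * P (Suc t) i l)
       + P a k j * P b i l - P (a+b) k j * P 0 i l"
  proof -
    have r1: "(\<Sum>t<Suc a. P t k j * P (Suc a+b-1-t) i l - P (Suc a+b-1-t) k j * P t i l)
      = (\<Sum>t<Suc a. P t k j * P (Suc a+b-1-t) i l) - (\<Sum>t<Suc a. P (Suc a+b-1-t) k j * P t i l)"
      by (rule sum_subtractf)
    have r2: "(\<Sum>t<Suc a. P t k j * P (Suc a+b-1-t) i l) = (\<Sum>t<a. P t k j * P (Suc (a+b-1-t)) i l) + P a k j * P b i l"
      by (simp add: Suc_diff_Suc)
    have r3: "(\<Sum>t<Suc a. P (Suc a+b-1-t) k j * P t i l) = P (a+b) k j * P 0 i l + (\<Sum>t<a. P (a+b-1-t) k j * P (Suc t) i l)"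
      by (simp add: sum.lessThan_Suc_shift del: sum.lessThan_Suc)
    show ?thesis unfolding r1 r2 r3 by (simp add: algebra_simps sum_subtractf)
  qed
  have sw: "sig k j k l * (sgm k * X) = gam i j k l * (sig k j i l * X)" for X
    using sgn8[of i j k l] by (simp add: mult.assoc[symmetric])
  show ?case
  proof (cases "i = l")
    case True
    have g: "sig l j k l * (sgm l * X) = gam l j k l * X" for X
      using sgn6[of l j k] by (simp add: mult.assoc[symmetric])
    show ?thesis unfolding L R using True by (simp add: algebra_simps sw g add.commute)
  next
    case False
    show ?thesis unfolding L R using False by (simp add: algebra_simps sw)
  qed
qed


lemma tau_comm: "P a (m+n+1) (m+n+1) * P b (m+n+1) (m+n+1) - P b (m+n+1) (m+n+1) * P a (m+n+1) (m+n+1) = 0"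
proof (induction a arbitrary: b rule: less_induct)
  case (less a)
  have N: "m+n+1 \<in> II" by simp
  have h: "P a (m+n+1) (m+n+1) * P b (m+n+1) (m+n+1) - sig (m+n+1) (m+n+1) (m+n+1) (m+n+1) * P b (m+n+1) (m+n+1) * P a (m+n+1) (m+n+1)
    = gam (m+n+1) (m+n+1) (m+n+1) (m+n+1) * (\<Sum>t<a. P t (m+n+1) (m+n+1) * P (a+b-1-t) (m+n+1) (m+n+1) - P (a+b-1-t) (m+n+1) (m+n+1) * P t (m+n+1) (m+n+1))"
    by (rule MainC[OF N N N N])
  have z: "(\<Sum>t<a. P t (m+n+1) (m+n+1) * P (a+b-1-t) (m+n+1) (m+n+1) - P (a+b-1-t) (m+n+1) (m+n+1) * P t (m+n+1) (m+n+1)) = 0"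
    using less by (intro sum.neutral) auto
  show ?case using h unfolding z sgn11 by simp
qed

end

theorem proposition11:
  fixes m n :: nat
    and c :: "complex \<Rightarrow> 'a::ring_1"
    and e :: "nat \<Rightarrow> nat \<Rightarrow> 'a"
  assumes alg_one: "c 1 = 1"
    and alg_add: "\<And>x y. c (x + y) = c x + c y"
    and alg_mult: "\<And>x y. c (x * y) = c x * c y"
    and alg_central: "\<And>z a. c z * a = a * c z"
    and rels: "gl_rels m n e"
  shows "\<forall>l\<ge>1. \<forall>k\<ge>1. tau m n e l * tau m n e k - tau m n e k * tau m n e l = 0"
  using tau_comm[OF rels] unfolding tau_def by blast

end
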